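(* Let $R=\mathbb Z/n\mathbb Z$ with $n\ge 2$, and let $M$ be a free $R[\mathbb Z\times\mathbb Z]$-module of finite rank with a fixed finite subset $F$ of non-zero elements whose subset sum problem is undecidable. Then there is a fixed rational subset of $M\rtimes(\mathbb Z\times\mathbb Z)$ whose membership problem is undecidable.
   Context: The subset sum problem for $F$ asks, given $m\in M$, whether there exist pairwise distinct $g_1,\dots,g_n\in\mathbb Z\times\mathbb Z$ and $f_1,\dots,f_n\in F$ with $m=\sum_i g_if_i$. $M\rtimes(\mathbb Z\times\mathbb Z)$ is $M\times(\mathbb Z\times\mathbb Z)$ with $(m,g)(m',g')=(m+gm',g+g')$; it is finitely generated. For a group $H$ with finite generating set $\Delta$ and canonical map $\pi:(\Delta\cup\Delta^{-1})^*\to H$, a rational subset is a set $\pi(L)$ with $L$ a regular language over $\Delta\cup\Delta^{-1}$; its membership problem asks, given a word $w$, whether $\pi(w)\in\pi(L)$. *)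

theory Defs
  imports Main "HOL-Library.Nat_Bijection"
begin

datatype recf = Zer | Sc | Proj nat | Comp recf "recf list" | PrimRec recf recf | Mn recf

inductive reval :: "recf \<Rightarrow> nat list \<Rightarrow> nat \<Rightarrow> bool" where
  zer: "reval Zer xs 0"
| sc: "reval Sc (x # xs) (Suc x)"
| proj: "i < length xs \<Longrightarrow> reval (Proj i) xs (xs ! i)"
| comp: "length ys = length gs \<Longrightarrow> (\<forall>i<length gs. reval (gs ! i) xs (ys ! i))
          \<Longrightarrow> reval f ys z \<Longrightarrow> reval (Comp f gs) xs z"
| pr0: "reval f xs y \<Longrightarrow> reval (PrimRec f g) (0 # xs) y"
| prS: "reval (PrimRec f g) (m # xs) y \<Longrightarrow> reval g (m # y # xs) z
          \<Longrightarrow> reval (PrimRec f g) (Suc m # xs) z"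
| mn: "reval f (y # xs) 0 \<Longrightarrow> (\<forall>z<y. \<exists>v. 0 < v \<and> reval f (z # xs) v)
          \<Longrightarrow> reval (Mn f) xs y"

definition decidable :: "nat set \<Rightarrow> bool" where
  "decidable A \<longleftrightarrow> (\<exists>f. \<forall>x. reval f [x] (if x \<in> A then 1 else 0))"

text \<open>An element of M is represented by its coefficient function
  ((a,b),j) \<mapsto> coefficient of t^(a,b) e_j, with values in {0..<n} (representing Z/nZ),
  finite support, and support in index range j < k.\<close>
type_synonym melt = "(int \<times> int) \<times> nat \<Rightarrow> int"

definition Mcar :: "nat \<Rightarrow> nat \<Rightarrow> melt set" where
  "Mcar n k = {m. (\<forall>x. 0 \<le> m x \<and> m x < int n) \<and> finite {x. m x \<noteq> 0}
                   \<and> (\<forall>g j. k \<le> j \<longrightarrow> m (g, j) = 0)}"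

definition mzero :: melt where "mzero = (\<lambda>_. 0)"

definition madd :: "nat \<Rightarrow> melt \<Rightarrow> melt \<Rightarrow> melt" where
  "madd n m m' = (\<lambda>x. (m x + m' x) mod int n)"

definition mneg :: "nat \<Rightarrow> melt \<Rightarrow> melt" where
  "mneg n m = (\<lambda>x. (- m x) mod int n)"

text \<open>Action of g = (p,q) in Z x Z: multiplication by the monomial t^(p,q).\<close>
definition mshift :: "int \<times> int \<Rightarrow> melt \<Rightarrow> melt" where
  "mshift g m = (\<lambda>((a, b), j). m ((a - fst g, b - snd g), j))"

definition msum :: "nat \<Rightarrow> ((int \<times> int) \<times> melt) list \<Rightarrow> melt" where
  "msum n ps = foldr (\<lambda>(g, f) acc. madd n (mshift g f) acc) ps mzero"

definition subset_sum_set :: "nat \<Rightarrow> melt set \<Rightarrow> melt set" where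
  "subset_sum_set n F = {m. \<exists>gs fs. length gs = length fs \<and> distinct gs \<and> set fs \<subseteq> F
                                 \<and> m = msum n (zip gs fs)}"

text \<open>Encoding of elements of M by natural numbers: a code is a list of entries
  ((a,b), j, c) standing for c * t^(a,b) e_j; the element is their sum (reduced mod n;
  entries with j >= k contribute nothing).  Every element of M has a code.\<close>
definition dec_entry :: "nat \<Rightarrow> (int \<times> int) \<times> nat \<times> nat" where
  "dec_entry e = (let (u, r) = prod_decode e; (v, r2) = prod_decode r; (j, c) = prod_decode r2
                  in ((int_decode u, int_decode v), j, c))"

definition decodeM :: "nat \<Rightarrow> nat \<Rightarrow> nat \<Rightarrow> melt" where
  "decodeM n k c = (\<lambda>(g, j). if j < k then
      (\<Sum>e\<leftarrow>map dec_entry (list_decode c). if fst e = g \<and> fst (snd e) = j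
                                              then int (snd (snd e)) else 0) mod int n
      else 0)"

type_synonym helt = "melt \<times> (int \<times> int)"

definition hmul :: "nat \<Rightarrow> helt \<Rightarrow> helt \<Rightarrow> helt" where
  "hmul n x y = (madd n (fst x) (mshift (snd x) (fst y)),
                 (fst (snd x) + fst (snd y), snd (snd x) + snd (snd y)))"

definition hone :: helt where "hone = (mzero, (0, 0))"

definition hinv :: "nat \<Rightarrow> helt \<Rightarrow> helt" where
  "hinv n x = (mneg n (mshift (- fst (snd x), - snd (snd x)) (fst x)),
               (- fst (snd x), - snd (snd x)))"

definition basis_vec :: "nat \<Rightarrow> melt" where
  "basis_vec i = (\<lambda>(g, j). if g = (0, 0) \<and> j = i then 1 else 0)"

definition hgen :: "nat \<Rightarrow> nat \<Rightarrow> helt" where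
  "hgen k i = (if i < k then (basis_vec i, (0, 0))
               else if i = k then (mzero, (1, 0)) else (mzero, (0, 1)))"

text \<open>Letters of Delta \<union> Delta^-1 are the numbers x < 2(k+2): x stands for
  generator (x div 2), inverted iff x is odd.\<close>
definition letter_val :: "nat \<Rightarrow> nat \<Rightarrow> nat \<Rightarrow> helt" where
  "letter_val n k x = (if even x then hgen k (x div 2) else hinv n (hgen k (x div 2)))"

definition word_val :: "nat \<Rightarrow> nat \<Rightarrow> nat list \<Rightarrow> helt" where
  "word_val n k w = foldr (\<lambda>x acc. hmul n (letter_val n k x) acc) w hone"

definition decodeW :: "nat \<Rightarrow> nat \<Rightarrow> nat list" where
  "decodeW k c = map (\<lambda>x. x mod (2 * (k + 2))) (list_decode c)"

datatype 'a rexp = RZero | ROne | RAtom 'a | RPlus "'a rexp" "'a rexp"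
  | RTimes "'a rexp" "'a rexp" | RStar "'a rexp"

fun lang :: "'a rexp \<Rightarrow> 'a list set" where
  "lang RZero = {}"
| "lang ROne = {[]}"
| "lang (RAtom a) = {[a]}"
| "lang (RPlus r s) = lang r \<union> lang s"
| "lang (RTimes r s) = {u @ v | u v. u \<in> lang r \<and> v \<in> lang s}"
| "lang (RStar r) = {concat ws | ws. set ws \<subseteq> lang r}"

fun atoms :: "'a rexp \<Rightarrow> 'a set" where
  "atoms RZero = {}"
| "atoms ROne = {}"
| "atoms (RAtom a) = {a}"
| "atoms (RPlus r s) = atoms r \<union> atoms s"
| "atoms (RTimes r s) = atoms r \<union> atoms s"
| "atoms (RStar r) = atoms r"

end

theory Submission
  imports Defs "HOL-Library.Product_Plus" "HOL-Library.Product_Lexorder" "HOL-Library.Function_Algebras" "HOL-Library.Multiset"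
begin


definition rf :: "nat \<Rightarrow> (nat list \<Rightarrow> nat) \<Rightarrow> bool" where
  "rf n h \<longleftrightarrow> (\<exists>f. \<forall>xs. length xs = n \<longrightarrow> reval f xs (h xs))"

lemma rf_cong: "rf n h \<Longrightarrow> (\<And>xs. length xs = n \<Longrightarrow> h xs = h' xs) \<Longrightarrow> rf n h'"
  unfolding rf_def by (elim exE) (rule exI, auto)

lemma rf_zero: "rf n (\<lambda>_. 0)"
  unfolding rf_def by (auto intro: reval.zer)

lemma rf_proj: "i < n \<Longrightarrow> rf n (\<lambda>xs. xs ! i)"
  unfolding rf_def by (auto intro: reval.proj)

lemma rf_suc: "rf (Suc n) (\<lambda>xs. Suc (xs ! 0))"
  unfolding rf_def
proof (intro exI allI impI)
  fix xs :: "nat list" assume "length xs = Suc n"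
  then obtain y ys where "xs = y # ys" by (cases xs) auto
  then show "reval Sc xs (Suc (xs ! 0))" by (simp add: reval.sc)
qed

lemma choose_list:
  assumes "\<forall>h\<in>set hs. \<exists>f. P f h"
  shows "\<exists>fs. length fs = length hs \<and> (\<forall>i<length hs. P (fs ! i) (hs ! i))"
  using assms
proof (induction hs)
  case Nil then show ?case by auto
next
  case (Cons h hs)
  then obtain fs where fs: "length fs = length hs" "\<forall>i<length hs. P (fs ! i) (hs ! i)" by auto
  obtain f where "P f h" using Cons.prems by auto
  then show ?case using fs
    by (intro exI[of _ "f # fs"]) (auto simp: nth_Cons split: nat.splits)
qed

lemma rf_comp:
  assumes g: "rf m g" and len: "length hs = m" and hs: "\<forall>h\<in>set hs. rf n h"
  shows "rf n (\<lambda>xs. g (map (\<lambda>h. h xs) hs))"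
proof -
  obtain gf where gf: "\<forall>ys. length ys = m \<longrightarrow> reval gf ys (g ys)" using g unfolding rf_def by auto
  obtain fs where fs: "length fs = length hs"
    "\<forall>i<length hs. \<forall>xs. length xs = n \<longrightarrow> reval (fs ! i) xs ((hs ! i) xs)"
    using choose_list[of hs "\<lambda>f h. \<forall>xs. length xs = n \<longrightarrow> reval f xs (h xs)"] hs
    unfolding rf_def by auto
  show ?thesis unfolding rf_def
  proof (intro exI allI impI)
    fix xs :: "nat list" assume "length xs = n"
    then show "reval (Comp gf fs) xs (g (map (\<lambda>h. h xs) hs))"
      using fs gf len by (intro reval.comp[where ys="map (\<lambda>h. h xs) hs"]) auto
  qed
qed

lemma rf_comp1: "rf (Suc 0) g \<Longrightarrow> rf n a \<Longrightarrow> rf n (\<lambda>xs. g [a xs])"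
  using rf_comp[of "Suc 0" g "[a]" n] by simp

lemma rf_comp2: "rf (Suc (Suc 0)) g \<Longrightarrow> rf n a \<Longrightarrow> rf n b \<Longrightarrow> rf n (\<lambda>xs. g [a xs, b xs])"
  using rf_comp[of "Suc (Suc 0)" g "[a, b]" n] by simp

lemma rf_comp3: "rf (Suc (Suc (Suc 0))) g \<Longrightarrow> rf n a \<Longrightarrow> rf n b \<Longrightarrow> rf n c \<Longrightarrow> rf n (\<lambda>xs. g [a xs, b xs, c xs])"
  using rf_comp[of "Suc (Suc (Suc 0))" g "[a, b, c]" n] by simp

lemma rf_primrec:
  assumes g0: "rf n G0" and gs: "rf (Suc (Suc n)) GS"
  shows "rf (Suc n) (\<lambda>xs. rec_nat (G0 (tl xs)) (\<lambda>m y. GS (m # y # tl xs)) (hd xs))"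
proof -
  obtain f where f: "\<forall>xs. length xs = n \<longrightarrow> reval f xs (G0 xs)" using g0 unfolding rf_def by auto
  obtain g where g: "\<forall>xs. length xs = Suc (Suc n) \<longrightarrow> reval g xs (GS xs)" using gs unfolding rf_def by auto
  have key: "reval (PrimRec f g) (m # ys) (rec_nat (G0 ys) (\<lambda>m y. GS (m # y # ys)) m)"
    if "length ys = n" for m ys
  proof (induction m)
    case 0 then show ?case using f that by (simp add: reval.pr0)
  next
    case (Suc m)
    have "reval g (m # rec_nat (G0 ys) (\<lambda>m y. GS (m # y # ys)) m # ys)
            (GS (m # rec_nat (G0 ys) (\<lambda>m y. GS (m # y # ys)) m # ys))"
      using g that by simp
    then show ?case using reval.prS[OF Suc] by simp
  qed
  show ?thesis unfolding rf_def
  proof (intro exI allI impI)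
    fix xs :: "nat list" assume "length xs = Suc n"
    then obtain m ys where "xs = m # ys" "length ys = n" by (cases xs) auto
    then show "reval (PrimRec f g) xs (rec_nat (G0 (tl xs)) (\<lambda>m y. GS (m # y # tl xs)) (hd xs))"
      using key by simp
  qed
qed

lemma rf_mn:
  assumes g: "rf (Suc n) G" and ex: "\<And>xs. length xs = n \<Longrightarrow> \<exists>y. G (y # xs) = 0"
  shows "rf n (\<lambda>xs. LEAST y. G (y # xs) = 0)"
proof -
  obtain f where f: "\<forall>xs. length xs = Suc n \<longrightarrow> reval f xs (G xs)" using g unfolding rf_def by auto
  show ?thesis unfolding rf_def
  proof (intro exI allI impI)
    fix xs :: "nat list" assume l: "length xs = n"
    let ?y = "LEAST y. G (y # xs) = 0"
    have y0: "G (?y # xs) = 0" using ex[OF l] by (rule LeastI_ex)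
    have yl: "\<forall>z<?y. G (z # xs) \<noteq> 0" using not_less_Least by blast
    have "length (?y # xs) = Suc n" using l by simp
    then have "reval f (?y # xs) (G (?y # xs))" using f by blast
    then have r0: "reval f (?y # xs) 0" using y0 by simp
    have r1: "\<forall>z<?y. \<exists>v. 0 < v \<and> reval f (z # xs) v"
    proof (intro allI impI)
      fix z assume "z < ?y"
      then have "G (z # xs) \<noteq> 0" using yl by blast
      then have "0 < G (z # xs)" by simp
      moreover have "length (z # xs) = Suc n" using l by simp
      then have "reval f (z # xs) (G (z # xs))" using f by blast
      ultimately show "\<exists>v. 0 < v \<and> reval f (z # xs) v" by blast
    qed
    show "reval (Mn f) xs ?y" by (rule reval.mn[OF r0 r1])
  qed
qed

lemma rf_const: "rf n (\<lambda>_. c)"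
proof (induction c)
  case 0 then show ?case by (rule rf_zero)
next
  case (Suc c)
  have s1: "rf (Suc 0) (\<lambda>ys. Suc (ys ! 0))" by (rule rf_suc)
  have "rf n (\<lambda>xs. (\<lambda>ys. Suc (ys ! 0)) [c])"
    by (rule rf_comp1[OF s1 Suc])
  then show ?case by simp
qed

lemma rf_Suc: "rf n a \<Longrightarrow> rf n (\<lambda>xs. Suc (a xs))"
proof -
  assume a: "rf n a"
  have s1: "rf (Suc 0) (\<lambda>ys. Suc (ys ! 0))" by (rule rf_suc)
  show ?thesis using rf_comp1[OF s1 a] by simp
qed

lemma list1: "length xs = Suc 0 \<Longrightarrow> \<exists>p. xs = [p]"
  by (cases xs) auto

lemma list2: "length xs = Suc (Suc 0) \<Longrightarrow> \<exists>p q. xs = [p, q]"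
  by (cases xs; cases "tl xs") auto

lemma list3: "length xs = Suc (Suc (Suc 0)) \<Longrightarrow> \<exists>p q r. xs = [p, q, r]"
  by (cases xs; cases "tl xs"; cases "tl (tl xs)") auto

lemma add_rec: "rec_nat q (\<lambda>m y. Suc y) p = p + q" by (induction p) auto
lemma mult_rec: "rec_nat 0 (\<lambda>m y. y + q) p = p * q" by (induction p) auto
lemma pred_rec: "rec_nat 0 (\<lambda>m y. m) p = p - 1" by (cases p) auto
lemma sub_rec: "rec_nat q (\<lambda>m y. y - Suc 0) p = q - p" by (induction p) auto
lemma ifz_rec: "rec_nat q (\<lambda>m y. r) p = (if p = 0 then q else r)" by (cases p) auto
lemma tri_rec: "rec_nat 0 (\<lambda>m y. Suc (y + m)) p = triangle p" by (induction p) auto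

lemma rf_add: "rf n a \<Longrightarrow> rf n b \<Longrightarrow> rf n (\<lambda>xs. a xs + b xs)"
proof -
  assume a: "rf n a" and b: "rf n b"
  have g0: "rf (Suc 0) (\<lambda>ys. ys ! 0)" by (rule rf_proj) simp
  have gs: "rf 3 (\<lambda>ys. Suc (ys ! 1))" by (intro rf_Suc rf_proj) simp
  have "rf (Suc (Suc 0)) (\<lambda>xs. xs ! 0 + xs ! Suc 0)"
    apply (rule rf_cong[OF rf_primrec[OF g0]])
    using gs apply (simp add: numeral_3_eq_3)
    subgoal for xs using list2[of xs] by (auto simp: add_rec)
    done
  from rf_comp2[OF this a b] show ?thesis by simp
qed

lemma rf_mult: "rf n a \<Longrightarrow> rf n b \<Longrightarrow> rf n (\<lambda>xs. a xs * b xs)"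
proof -
  assume a: "rf n a" and b: "rf n b"
  have g0: "rf (Suc 0) (\<lambda>ys. 0)" by (rule rf_zero)
  have gs: "rf 3 (\<lambda>ys. ys ! 1 + ys ! 2)" by (intro rf_add rf_proj) simp_all
  have "rf (Suc (Suc 0)) (\<lambda>xs. xs ! 0 * xs ! Suc 0)"
    apply (rule rf_cong[OF rf_primrec[OF g0]])
    using gs apply (simp add: numeral_3_eq_3)
    subgoal for xs using list2[of xs] by (auto simp: mult_rec)
    done
  from rf_comp2[OF this a b] show ?thesis by simp
qed

lemma rf_pred: "rf n a \<Longrightarrow> rf n (\<lambda>xs. a xs - 1)"
proof -
  assume a: "rf n a"
  have g0: "rf 0 (\<lambda>ys. 0)" by (rule rf_zero)
  have gs: "rf 2 (\<lambda>ys. ys ! 0)" by (rule rf_proj) simp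
  have "rf (Suc 0) (\<lambda>xs. xs ! 0 - 1)"
    apply (rule rf_cong[OF rf_primrec[OF g0]])
    using gs apply (simp add: numeral_2_eq_2)
    subgoal for xs using list1[of xs] by (auto simp: pred_rec)
    done
  from rf_comp1[OF this a] show ?thesis by simp
qed

lemma rf_sub: "rf n a \<Longrightarrow> rf n b \<Longrightarrow> rf n (\<lambda>xs. a xs - b xs)"
proof -
  assume a: "rf n a" and b: "rf n b"
  have g0: "rf (Suc 0) (\<lambda>ys. ys ! 0)" by (rule rf_proj) simp
  have gs: "rf 3 (\<lambda>ys. ys ! 1 - 1)" by (intro rf_pred rf_proj) simp
  have "rf (Suc (Suc 0)) (\<lambda>xs. xs ! Suc 0 - xs ! 0)"
    apply (rule rf_cong[OF rf_primrec[OF g0]])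
    using gs apply (simp add: numeral_3_eq_3)
    subgoal for xs using list2[of xs] by (auto simp: sub_rec)
    done
  from rf_comp2[OF this b a] show ?thesis by simp
qed

lemma rf_ifz: "rf n a \<Longrightarrow> rf n b \<Longrightarrow> rf n c \<Longrightarrow> rf n (\<lambda>xs. if a xs = 0 then b xs else c xs)"
proof -
  assume a: "rf n a" and b: "rf n b" and c: "rf n c"
  have g0: "rf (Suc (Suc 0)) (\<lambda>ys. ys ! 0)" by (rule rf_proj) simp
  have gs: "rf 4 (\<lambda>ys. ys ! 3)" by (rule rf_proj) simp
  have "rf (Suc (Suc (Suc 0))) (\<lambda>xs. if xs ! 0 = 0 then xs ! Suc 0 else xs ! Suc (Suc 0))"
    apply (rule rf_cong[OF rf_primrec[OF g0]])
    using gs apply (simp add: numeral_3_eq_3 numeral_Bit0)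
    subgoal for xs using list3[of xs] by (auto simp: ifz_rec numeral_2_eq_2)
    done
  from rf_comp3[OF this a b c] show ?thesis by (rule rf_cong) simp
qed

lemma rf_tri: "rf n a \<Longrightarrow> rf n (\<lambda>xs. triangle (a xs))"
proof -
  assume a: "rf n a"
  have g0: "rf 0 (\<lambda>ys. 0)" by (rule rf_zero)
  have gs: "rf 2 (\<lambda>ys. ys ! 1 + Suc (ys ! 0))" by (intro rf_add rf_Suc rf_proj) simp_all
  have "rf (Suc 0) (\<lambda>xs. triangle (xs ! 0))"
    apply (rule rf_cong[OF rf_primrec[OF g0]])
    using gs apply (simp add: numeral_2_eq_2)
    subgoal for xs using list1[of xs] by (auto simp: tri_rec)
    done
  from rf_comp1[OF this a] show ?thesis by simp
qed

lemma rf_least: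
  assumes g: "rf 2 G" and ex: "\<And>x. \<exists>y. G [y, x] = 0" and a: "rf n a"
  shows "rf n (\<lambda>xs. LEAST y. G [y, a xs] = 0)"
proof -
  have g': "rf (Suc (Suc 0)) G" using g by (simp add: numeral_2_eq_2)
  have "rf (Suc 0) (\<lambda>xs. LEAST y. G (y # xs) = 0)"
  proof (rule rf_mn[OF g'])
    fix xs :: "nat list" assume "length xs = Suc 0"
    then obtain p where "xs = [p]" using list1 by auto
    then show "\<exists>y. G (y # xs) = 0" using ex by simp
  qed
  from rf_comp1[OF this a] show ?thesis by simp
qed




lemma rf_pe: "rf n a \<Longrightarrow> rf n b \<Longrightarrow> rf n (\<lambda>xs. prod_encode (a xs, b xs))"
proof -
  assume a: "rf n a" and b: "rf n b"
  have "rf n (\<lambda>xs. triangle (a xs + b xs) + a xs)" by (intro rf_add rf_tri a b)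
  then show ?thesis by (rule rf_cong) (simp add: prod_encode_def)
qed

definition psum :: "nat \<Rightarrow> nat" where
  "psum m = (LEAST s. 1 - (triangle (Suc s) - m) = 0)"

lemma tri_ge: "s \<le> triangle s" by (induction s) auto

lemma psum_prop: "triangle (psum m) \<le> m \<and> m < triangle (Suc (psum m))"
proof -
  have ex: "1 - (triangle (Suc m) - m) = 0" using tri_ge[of "Suc m"] by simp
  have l: "1 - (triangle (Suc (psum m)) - m) = 0" unfolding psum_def using LeastI[of "\<lambda>s. 1 - (triangle (Suc s) - m) = 0" m] ex by blast
  then have A: "m < triangle (Suc (psum m))" by simp
  have B: "triangle (psum m) \<le> m"
  proof (cases "psum m")
    case 0 then show ?thesis by simp
  next
    case (Suc s)
    then have "s < psum m" by simp
    then have "1 - (triangle (Suc s) - m) \<noteq> 0" unfolding psum_def by (rule not_less_Least)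
    then show ?thesis using Suc by simp
  qed
  show ?thesis using A B by simp
qed

lemma pd_char: "prod_decode m = (m - triangle (psum m), psum m - (m - triangle (psum m)))"
proof -
  let ?s = "psum m"
  let ?x = "m - triangle ?s"
  have p: "triangle ?s \<le> m" "m < triangle ?s + Suc ?s" using psum_prop[of m] by auto
  then have "?x \<le> ?s" by simp
  then have "prod_encode (?x, ?s - ?x) = m" using p by (simp add: prod_encode_def)
  then show ?thesis by (metis prod_encode_inverse)
qed

lemma rf_psum: "rf n a \<Longrightarrow> rf n (\<lambda>xs. psum (a xs))"
proof -
  assume a: "rf n a"
  have g: "rf 2 (\<lambda>ys. 1 - (triangle (Suc (ys ! 0)) - ys ! 1))"
    by (intro rf_sub rf_const rf_tri rf_Suc rf_proj) simp_all
  have ex: "\<And>x. \<exists>y. 1 - (triangle (Suc ([y, x] ! 0)) - [y, x] ! 1) = 0"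
  proof -
    fix x show "\<exists>y. 1 - (triangle (Suc ([y, x] ! 0)) - [y, x] ! 1) = 0"
      using tri_ge[of "Suc x"] by (intro exI[of _ x]) simp
  qed
  show ?thesis using rf_least[OF g ex a] unfolding psum_def by simp
qed

lemma rf_pd1: "rf n a \<Longrightarrow> rf n (\<lambda>xs. fst (prod_decode (a xs)))"
proof -
  assume a: "rf n a"
  have "rf n (\<lambda>xs. a xs - triangle (psum (a xs)))" by (intro rf_sub rf_tri rf_psum a)
  then show ?thesis by (rule rf_cong) (simp add: pd_char)
qed

lemma rf_pd2: "rf n a \<Longrightarrow> rf n (\<lambda>xs. snd (prod_decode (a xs)))"
proof -
  assume a: "rf n a"
  have "rf n (\<lambda>xs. psum (a xs) - (a xs - triangle (psum (a xs))))" by (intro rf_sub rf_tri rf_psum a)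
  then show ?thesis by (rule rf_cong) (simp add: pd_char)
qed

lemma div2_least: "(LEAST q. 1 - (Suc (Suc (2 * q)) - u) = 0) = u div 2"
proof (rule Least_equality)
  show "1 - (Suc (Suc (2 * (u div 2))) - u) = 0" by simp
next
  fix y assume "1 - (Suc (Suc (2 * y)) - u) = 0"
  then have "u < Suc (Suc (2 * y))" by simp
  then show "u div 2 \<le> y" by simp
qed

lemma div2_least': "(LEAST q. Suc 0 \<le> Suc (Suc (2 * q)) - u) = u div 2"
  using div2_least[of u] by simp

lemma rf_div2: "rf n a \<Longrightarrow> rf n (\<lambda>xs. a xs div 2)"
proof -
  assume a: "rf n a"
  have g: "rf 2 (\<lambda>ys. 1 - (Suc (Suc (2 * (ys ! 0))) - ys ! 1))"
    by (intro rf_sub rf_const rf_mult rf_Suc rf_proj) simp_all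
  have ex: "\<And>x. \<exists>y. 1 - (Suc (Suc (2 * ([y, x] ! 0))) - [y, x] ! 1) = 0"
    subgoal for x by (intro exI[of _ x]) simp
    done
  show ?thesis using rf_least[OF g ex a] by (rule rf_cong) (simp add: div2_least')
qed

lemma rf_mod2: "rf n a \<Longrightarrow> rf n (\<lambda>xs. a xs mod 2)"
proof -
  assume a: "rf n a"
  have "rf n (\<lambda>xs. a xs - 2 * (a xs div 2))" by (intro rf_sub rf_mult rf_const rf_div2 a)
  then show ?thesis by (rule rf_cong) (simp add: minus_mult_div_eq_mod)
qed

definition consc :: "nat \<Rightarrow> nat \<Rightarrow> nat" where "consc x L = Suc (prod_encode (x, L))"

definition repc :: "nat \<Rightarrow> nat \<Rightarrow> nat \<Rightarrow> nat" where
  "repc x t L = rec_nat L (\<lambda>_ acc. consc x acc) t"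

lemma list_decode_consc: "list_decode (consc x L) = x # list_decode L"
  by (simp add: consc_def)

lemma list_decode_repc: "list_decode (repc x t L) = replicate t x @ list_decode L"
  by (induction t) (simp_all add: repc_def list_decode_consc)

lemma rf_consc: "rf n a \<Longrightarrow> rf n b \<Longrightarrow> rf n (\<lambda>xs. consc (a xs) (b xs))"
  unfolding consc_def by (intro rf_Suc rf_pe)

lemma rf_repc: "rf n a \<Longrightarrow> rf n b \<Longrightarrow> rf n c \<Longrightarrow> rf n (\<lambda>xs. repc (a xs) (b xs) (c xs))"
proof -
  assume a: "rf n a" and b: "rf n b" and c: "rf n c"
  have g0: "rf (Suc (Suc 0)) (\<lambda>ys. ys ! Suc 0)" by (rule rf_proj) simp
  have gs: "rf (Suc (Suc (Suc (Suc 0)))) (\<lambda>ys. consc (ys ! 2) (ys ! 1))"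
    by (intro rf_consc rf_proj) simp_all
  have "rf (Suc (Suc (Suc 0))) (\<lambda>xs. repc (xs ! Suc 0) (xs ! 0) (xs ! Suc (Suc 0)))"
    apply (rule rf_cong[OF rf_primrec[OF g0 gs]])
    subgoal for xs using list3[of xs] by (auto simp: repc_def)
    done
  from rf_comp3[OF this b a c] show ?thesis by (rule rf_cong) simp
qed




definition fu :: "nat \<Rightarrow> nat" where "fu e = fst (prod_decode e)"
definition fv :: "nat \<Rightarrow> nat" where "fv e = fst (prod_decode (snd (prod_decode e)))"
definition fj :: "nat \<Rightarrow> nat" where "fj e = fst (prod_decode (snd (prod_decode (snd (prod_decode e)))))"
definition fc :: "nat \<Rightarrow> nat" where "fc e = snd (prod_decode (snd (prod_decode (snd (prod_decode e)))))"
definition pa :: "nat \<Rightarrow> nat" where "pa u = (if u mod 2 = 0 then u div 2 else 0)"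
definition na :: "nat \<Rightarrow> nat" where "na u = (if u mod 2 = 0 then 0 else Suc (u div 2))"
definition ccp :: "nat \<Rightarrow> nat \<Rightarrow> nat" where "ccp k e = (if k - fj e = 0 then 0 else fc e)"

definition blockc :: "nat \<Rightarrow> nat \<Rightarrow> nat \<Rightarrow> nat" where
  "blockc k e L = repc (2*k) (pa (fu e)) (repc (2*k+1) (na (fu e)) (repc (2*k+2) (pa (fv e))
     (repc (2*k+3) (na (fv e)) (repc (2 * fj e) (ccp k e) (repc (2*k+3) (pa (fv e))
     (repc (2*k+2) (na (fv e)) (repc (2*k+1) (pa (fu e)) (repc (2*k) (na (fu e)) L))))))))"

definition blockL :: "nat \<Rightarrow> nat \<Rightarrow> nat list" where
  "blockL k e = replicate (pa (fu e)) (2*k) @ replicate (na (fu e)) (2*k+1) @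
     replicate (pa (fv e)) (2*k+2) @ replicate (na (fv e)) (2*k+3) @ replicate (ccp k e) (2 * fj e) @
     replicate (pa (fv e)) (2*k+3) @ replicate (na (fv e)) (2*k+2) @
     replicate (pa (fu e)) (2*k+1) @ replicate (na (fu e)) (2*k)"

lemma list_decode_blockc: "list_decode (blockc k e L) = blockL k e @ list_decode L"
  by (simp add: blockc_def blockL_def list_decode_repc)

definition stepc :: "nat \<Rightarrow> nat \<Rightarrow> nat" where
  "stepc k st = (if fst (prod_decode st) = 0 then st else
     prod_encode (snd (prod_decode (fst (prod_decode st) - 1)),
                  blockc k (fst (prod_decode (fst (prod_decode st) - 1))) (snd (prod_decode st))))"

definition itc :: "nat \<Rightarrow> nat \<Rightarrow> nat \<Rightarrow> nat" where
  "itc k i c = rec_nat (prod_encode (c, 0)) (\<lambda>_ st. stepc k st) i"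

definition hc :: "nat \<Rightarrow> nat \<Rightarrow> nat" where
  "hc k c = snd (prod_decode (itc k c c))"

definition gF :: "nat \<Rightarrow> nat list \<Rightarrow> nat list \<Rightarrow> nat list" where
  "gF k es acc = foldl (\<lambda>acc e. blockL k e @ acc) acc es"

lemma itc_inv:
  "gF k (list_decode (fst (prod_decode (itc k i c)))) (list_decode (snd (prod_decode (itc k i c))))
     = gF k (list_decode c) [] \<and> fst (prod_decode (itc k i c)) \<le> c - i"
proof (induction i)
  case 0 then show ?case by (simp add: itc_def)
next
  case (Suc i)
  let ?st = "itc k i c"
  have itS: "itc k (Suc i) c = stepc k ?st" by (simp add: itc_def)
  show ?case
  proof (cases "fst (prod_decode ?st) = 0")
    case True
    then show ?thesis using Suc itS by (simp add: stepc_def)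
  next
    case False
    then obtain r0 where r0: "fst (prod_decode ?st) = Suc r0" by (cases "fst (prod_decode ?st)") auto
    obtain e r' where er: "prod_decode r0 = (e, r')" by (cases "prod_decode r0")
    have le: "r' \<le> r0" using er by (metis le_prod_encode_2 prod_decode_inverse)
    have st': "itc k (Suc i) c = prod_encode (r', blockc k e (snd (prod_decode ?st)))"
      using itS r0 er by (simp add: stepc_def)
    have ld: "list_decode (fst (prod_decode ?st)) = e # list_decode r'" using r0 er by simp
    have "gF k (list_decode r') (list_decode (blockc k e (snd (prod_decode ?st))))
        = gF k (list_decode (fst (prod_decode ?st))) (list_decode (snd (prod_decode ?st)))"
      using ld by (simp add: gF_def list_decode_blockc)
    moreover have "Suc r0 \<le> c - i" using Suc.IH r0 by (simp only:)
    then have "r' \<le> c - Suc i" using le by arith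
    ultimately show ?thesis using Suc.IH st' by simp
  qed
qed

lemma list_decode_hc: "list_decode (hc k c) = gF k (list_decode c) []"
proof -
  have "fst (prod_decode (itc k c c)) = 0" using itc_inv[of k c c] by simp
  then show ?thesis using itc_inv[of k c c] unfolding hc_def by (simp add: gF_def)
qed

lemma rf_stepc: "rf n a \<Longrightarrow> rf n (\<lambda>xs. stepc k (a xs))"
  unfolding stepc_def blockc_def pa_def na_def ccp_def fu_def fv_def fj_def fc_def
  by (intro rf_ifz rf_pe rf_pd1 rf_pd2 rf_pred rf_repc rf_mult rf_add rf_mod2 rf_div2 rf_sub rf_Suc rf_const)

lemma rf_hc: "rf (Suc 0) (\<lambda>xs. hc k (xs ! 0))"
proof -
  have g0: "rf (Suc 0) (\<lambda>ys. prod_encode (ys ! 0, 0))" by (intro rf_pe rf_proj rf_const) simp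
  have gs: "rf (Suc (Suc (Suc 0))) (\<lambda>ys. stepc k (ys ! Suc 0))" by (intro rf_stepc rf_proj) simp
  have "rf (Suc (Suc 0)) (\<lambda>xs. itc k (xs ! 0) (xs ! Suc 0))"
    apply (rule rf_cong[OF rf_primrec[OF g0 gs]])
    subgoal for xs using list2[of xs] by (auto simp: itc_def)
    done
  from rf_comp2[OF this rf_proj[of 0 "Suc 0"] rf_proj[of 0 "Suc 0"]]
  have "rf (Suc 0) (\<lambda>xs. itc k (xs ! 0) (xs ! 0))" by simp
  from rf_pd2[OF this] show ?thesis unfolding hc_def .
qed




lemma mshift_apply: "mshift g m ((a, b), j) = m ((a - fst g, b - snd g), j)"
  by (simp add: mshift_def)

lemma mshift_apply': "mshift g m x = m ((fst (fst x) - fst g, snd (fst x) - snd g), snd x)"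
  by (cases x) (auto simp: mshift_def)

lemma mshift_0[simp]: "mshift 0 f = f"
  by (rule ext) (simp add: mshift_apply')

lemma mshift_mshift: "mshift a (mshift b f) = mshift (a + b) f"
  by (rule ext) (simp add: mshift_apply' algebra_simps)

lemma mshift_plus: "mshift g (f + h) = mshift g f + mshift g h"
  by (rule ext) (simp add: mshift_apply')

lemma mshift_zero[simp]: "mshift g 0 = 0"
  by (rule ext) (simp add: mshift_apply')

lemma mzero_eq: "mzero = 0"
  by (rule ext) (simp add: mzero_def)

section \<open>Integer-level semantics of words\<close>

definition lvec :: "nat \<Rightarrow> nat \<Rightarrow> melt" where
  "lvec k l = (\<lambda>(g, j). if l div 2 < k \<and> g = (0, 0) \<and> j = l div 2 then (if even l then 1 else -1) else 0)"

definition ldisp :: "nat \<Rightarrow> nat \<Rightarrow> int \<times> int" where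
  "ldisp k l = (if l div 2 < k then (0, 0) else if l div 2 = k then (if even l then (1, 0) else (-1, 0))
                else (if even l then (0, 1) else (0, -1)))"

fun ival :: "nat \<Rightarrow> nat list \<Rightarrow> melt" where
  "ival k [] = 0"
| "ival k (l # w) = lvec k l + mshift (ldisp k l) (ival k w)"

fun pos :: "nat \<Rightarrow> nat list \<Rightarrow> int \<times> int" where
  "pos k [] = 0"
| "pos k (l # w) = ldisp k l + pos k w"

lemma ival_append: "ival k (u @ v) = ival k u + mshift (pos k u) (ival k v)"
  by (induction u) (auto simp: fun_eq_iff mshift_apply' algebra_simps)

lemma pos_append: "pos k (u @ v) = pos k u + pos k v"
  by (induction u) (simp_all add: algebra_simps)

lemma letter_fst: "fst (letter_val n k l) x mod int n = lvec k l x mod int n"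
proof -
  obtain g j where x: "x = (g, j)" by (cases x)
  show ?thesis
    unfolding x letter_val_def hgen_def hinv_def lvec_def basis_vec_def mneg_def mzero_def
    by (auto simp: mshift_apply' mod_minus_eq)
qed

lemma letter_snd: "snd (letter_val n k l) = ldisp k l"
  unfolding letter_val_def hgen_def hinv_def ldisp_def
  by (auto simp: mzero_def)

lemma word_val_eq: "word_val n k w = ((\<lambda>x. ival k w x mod int n), pos k w)"
proof (induction w)
  case Nil then show ?case by (simp add: word_val_def hone_def mzero_def zero_prod_def)
next
  case (Cons l w)
  have wv: "word_val n k (l # w) = hmul n (letter_val n k l) (word_val n k w)"
    by (simp add: word_val_def)
  have "fst (word_val n k (l # w)) = (\<lambda>x. ival k (l # w) x mod int n)"
  proof (rule ext)
    fix x
    have "fst (word_val n k (l # w)) x =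
      (fst (letter_val n k l) x + (ival k w (((fst (fst x) - fst (ldisp k l), snd (fst x) - snd (ldisp k l))), snd x) mod int n)) mod int n"
      unfolding wv Cons hmul_def madd_def by (simp add: mshift_apply' letter_snd)
    also have "\<dots> = (fst (letter_val n k l) x mod int n + ival k w (((fst (fst x) - fst (ldisp k l), snd (fst x) - snd (ldisp k l))), snd x)) mod int n"
      by (simp only: mod_add_left_eq mod_add_right_eq)
    also have "\<dots> = (lvec k l x mod int n + ival k w (((fst (fst x) - fst (ldisp k l), snd (fst x) - snd (ldisp k l))), snd x)) mod int n"
      by (simp add: letter_fst)
    also have "\<dots> = ival k (l # w) x mod int n"
      by (simp add: mod_add_left_eq mshift_apply')
    finally show "fst (word_val n k (l # w)) x = ival k (l # w) x mod int n" .
  qed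
  moreover have "snd (word_val n k (l # w)) = pos k (l # w)"
    unfolding wv Cons hmul_def by (simp add: letter_snd prod_eq_iff)
  ultimately show ?case by (metis prod.collapse)
qed




lemma mshift_00[simp]: "mshift (0, 0) f = f"
  using mshift_0[of f] by (simp add: zero_prod_def)

lemma ival_moves: "\<forall>l\<in>set w. k \<le> l div 2 \<Longrightarrow> ival k w = 0"
proof (induction w)
  case Nil then show ?case by simp
next
  case (Cons l w)
  have lv: "lvec k l = 0" using Cons.prems by (auto simp: lvec_def fun_eq_iff)
  have "\<forall>l\<in>set w. k \<le> l div 2" using Cons.prems by simp
  then have iw: "ival k w = 0" by (rule Cons.IH)
  show ?case by (simp only: ival.simps lv iw mshift_zero add_0)
qed

lemma ival_rep_move: "k \<le> l div 2 \<Longrightarrow> ival k (replicate t l) = 0"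
  by (rule ival_moves) simp

lemma pos_rep: "pos k (replicate t l) = (int t * fst (ldisp k l), int t * snd (ldisp k l))"
  by (induction t) (simp_all add: algebra_simps zero_prod_def prod_eq_iff)

lemma ldisp_x: "ldisp k (2*k) = (1, 0)" by (simp add: ldisp_def)
lemma ldisp_X: "ldisp k (2*k+1) = (-1, 0)" by (simp add: ldisp_def)
lemma ldisp_y: "ldisp k (2*k+2) = (0, 1)" by (simp add: ldisp_def)
lemma ldisp_Y: "ldisp k (2*k+3) = (0, -1)" by (simp add: ldisp_def)

lemma ival_rep_e: "j < k \<Longrightarrow> ival k (replicate t (2*j)) = (\<lambda>x. int t * lvec k (2*j) x)"
  by (induction t) (auto simp: ldisp_def fun_eq_iff algebra_simps)

lemma pos_rep_e: "j < k \<Longrightarrow> pos k (replicate t (2*j)) = 0"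
  by (induction t) (auto simp: ldisp_def zero_prod_def)

definition contrib :: "nat \<Rightarrow> nat \<Rightarrow> melt" where
  "contrib k e = mshift (int_decode (fu e), int_decode (fv e)) (\<lambda>x. int (ccp k e) * lvec k (2 * fj e) x)"

lemma int_decode_pn: "int_decode u = int (pa u) - int (na u)"
  by (auto simp: int_decode_def sum_decode_def pa_def na_def)

lemma E_ival: "ival k (replicate (ccp k e) (2 * fj e)) = (\<lambda>x. int (ccp k e) * lvec k (2 * fj e) x)"
proof (cases "fj e < k")
  case True then show ?thesis by (rule ival_rep_e)
next
  case False then have "ccp k e = 0" by (simp add: ccp_def)
  then show ?thesis by (simp add: fun_eq_iff)
qed

lemma E_pos: "pos k (replicate (ccp k e) (2 * fj e)) = 0"
proof (cases "fj e < k")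
  case True then show ?thesis by (rule pos_rep_e)
next
  case False then have "ccp k e = 0" by (simp add: ccp_def)
  then show ?thesis by simp
qed

lemma move_ivals:
  "ival k (replicate t (2*k)) = 0" "ival k (replicate t (2*k+1)) = 0"
  "ival k (replicate t (2*k+2)) = 0" "ival k (replicate t (2*k+3)) = 0"
  by (rule ival_rep_move; simp)+

lemma move_poss:
  "pos k (replicate t (2*k)) = (int t, 0)" "pos k (replicate t (2*k+1)) = (- int t, 0)"
  "pos k (replicate t (2*k+2)) = (0, int t)" "pos k (replicate t (2*k+3)) = (0, - int t)"
  by (simp_all only: pos_rep ldisp_x ldisp_X ldisp_y ldisp_Y) simp_all

lemma ival_blockL:
  "ival k (blockL k e @ L) = contrib k e + ival k L \<and> pos k (blockL k e @ L) = pos k L"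
proof -
  let ?P = "(int (pa (fu e)) - int (na (fu e)), int (pa (fv e)) - int (na (fv e)))"
  let ?M1 = "replicate (pa (fu e)) (2*k) @ replicate (na (fu e)) (2*k+1) @
     replicate (pa (fv e)) (2*k+2) @ replicate (na (fv e)) (2*k+3)"
  let ?E = "replicate (ccp k e) (2 * fj e)"
  let ?M2 = "replicate (pa (fv e)) (2*k+3) @ replicate (na (fv e)) (2*k+2) @
     replicate (pa (fu e)) (2*k+1) @ replicate (na (fu e)) (2*k)"
  have bl: "blockL k e @ L = ?M1 @ (?E @ (?M2 @ L))" by (simp add: blockL_def)
  have i1: "ival k ?M1 = 0" by (rule ival_moves) auto
  have i2: "ival k ?M2 = 0" by (rule ival_moves) auto
  have p1: "pos k ?M1 = ?P" by (simp only: pos_append move_poss) simp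
  have p2: "pos k ?M2 = - ?P" by (simp only: pos_append move_poss) simp
  have a1: "\<And>X. ival k (?M1 @ X) = mshift ?P (ival k X)"
    by (simp only: ival_append[of k ?M1] i1 p1 add.left_neutral)
  have a2: "\<And>X. ival k (?M2 @ X) = mshift (- ?P) (ival k X)"
    by (simp only: ival_append[of k ?M2] i2 p2 add.left_neutral)
  have a3: "\<And>X. ival k (?E @ X) = ival k ?E + ival k X"
    by (simp only: ival_append[of k ?E] E_pos mshift_0)
  have "ival k (blockL k e @ L) = mshift ?P (ival k ?E + mshift (- ?P) (ival k L))"
    by (simp only: bl a1 a2 a3)
  also have "\<dots> = mshift ?P (ival k ?E) + ival k L"
    by (simp only: mshift_plus mshift_mshift add.right_inverse mshift_0)
  finally have "ival k (blockL k e @ L) = mshift ?P (ival k ?E) + ival k L" .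
  moreover have "pos k (blockL k e @ L) = pos k L"
    by (simp only: bl pos_append[of k ?M1] pos_append[of k ?E] pos_append[of k ?M2] p1 p2 E_pos) (simp add: zero_prod_def)
  ultimately show ?thesis by (simp add: contrib_def int_decode_pn E_ival)
qed

lemma gF_ival: "ival k (gF k es acc) = sum_list (map (contrib k) es) + ival k acc \<and> pos k (gF k es acc) = pos k acc"
proof (induction es arbitrary: acc)
  case Nil then show ?case by (simp add: gF_def)
next
  case (Cons e es)
  have "gF k (e # es) acc = gF k es (blockL k e @ acc)" by (simp add: gF_def)
  then show ?case using Cons.IH[of "blockL k e @ acc"] ival_blockL[of k e acc] by (simp add: algebra_simps)
qed

lemma sum_list_apply: "sum_list fs (x :: 'a) = sum_list (map (\<lambda>f. f x) fs)"
  by (induction fs) auto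

lemma dec_entry_eq: "dec_entry e = ((int_decode (fu e), int_decode (fv e)), fj e, fc e)"
  by (simp add: dec_entry_def fu_def fv_def fj_def fc_def split: prod.splits)

lemma lvec_e: "lvec k (2 * j') (h, j) = (if j' < k \<and> h = (0, 0) \<and> j = j' then 1 else 0)"
  by (simp add: lvec_def)

lemma contrib_apply: "contrib k e (g, j) =
  (if fj e < k \<and> g = (int_decode (fu e), int_decode (fv e)) \<and> j = fj e then int (fc e) else 0)"
  by (cases g) (auto simp: contrib_def mshift_apply lvec_e ccp_def)

lemma sum_list_zeros: "(\<forall>x\<in>set xs. f x = (0::int)) \<Longrightarrow> sum_list (map f xs) = 0"
  by (induction xs) auto

lemma decodeM_eq: "decodeM n k c = (\<lambda>x. ival k (gF k (list_decode c) []) x mod int n)"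
proof (rule ext)
  fix x :: "(int \<times> int) \<times> nat"
  obtain g j where x: "x = (g, j)" by (cases x)
  let ?es = "list_decode c"
  have iv: "ival k (gF k ?es []) x = sum_list (map (\<lambda>e. contrib k e (g, j)) ?es)"
    using gF_ival[of k ?es "[]"] by (simp add: x sum_list_apply o_def)
  show "decodeM n k c x = ival k (gF k ?es []) x mod int n"
  proof (cases "j < k")
    case True
    have eq: "map (\<lambda>e. if fst e = g \<and> fst (snd e) = j then int (snd (snd e)) else 0) (map dec_entry ?es)
        = map (\<lambda>e. contrib k e (g, j)) ?es"
      using True by (auto simp: dec_entry_eq contrib_apply)
    have d: "decodeM n k c (g, j) = sum_list (map (\<lambda>e. if fst e = g \<and> fst (snd e) = j then int (snd (snd e)) else 0) (map dec_entry ?es)) mod int n"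
      unfolding decodeM_def using True by simp
    show ?thesis unfolding x by (simp only: d eq iv[unfolded x])
  next
    case False
    have "sum_list (map (\<lambda>e. contrib k e (g, j)) ?es) = 0"
      using False by (intro sum_list_zeros) (auto simp: contrib_apply)
    then show ?thesis using False iv unfolding x by (simp add: decodeM_def)
  qed
qed

lemma blockL_letters: "set (blockL k e) \<subseteq> {..<2 * (k + 2)}"
proof -
  have "ccp k e \<noteq> 0 \<Longrightarrow> fj e < k" by (auto simp: ccp_def split: if_splits)
  then show ?thesis unfolding blockL_def by auto
qed

lemma gF_letters: "set acc \<subseteq> {..<2 * (k + 2)} \<Longrightarrow> set (gF k es acc) \<subseteq> {..<2 * (k + 2)}"
proof (induction es arbitrary: acc)
  case Nil then show ?case by (simp add: gF_def)
next
  case (Cons e es)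
  have "gF k (e # es) acc = gF k es (blockL k e @ acc)" by (simp add: gF_def)
  then show ?case using Cons.IH[of "blockL k e @ acc"] Cons.prems blockL_letters[of k e] by simp
qed

lemma word_val_hc: "word_val n k (decodeW k (hc k c)) = (decodeM n k c, 0)"
proof -
  let ?w = "gF k (list_decode c) []"
  have "decodeW k (hc k c) = map (\<lambda>x. x mod (2 * (k + 2))) ?w"
    by (simp add: decodeW_def list_decode_hc)
  also have "\<dots> = ?w"
    using gF_letters[of "[]" k "list_decode c"] by (intro map_idI) auto
  finally have "decodeW k (hc k c) = ?w" .
  moreover have "pos k ?w = 0" using gF_ival[of k "list_decode c" "[]"] by simp
  ultimately show ?thesis by (simp add: word_val_eq decodeM_eq)
qed




fun rw :: "nat list \<Rightarrow> nat rexp" where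
  "rw [] = ROne"
| "rw (a # w) = RTimes (RAtom a) (rw w)"

lemma lang_rw: "lang (rw w) = {w}"
  by (induction w) auto

lemma atoms_rw: "atoms (rw w) = set w"
  by (induction w) auto

fun rsum :: "nat rexp list \<Rightarrow> nat rexp" where
  "rsum [] = RZero"
| "rsum (r # rs) = RPlus r (rsum rs)"

lemma lang_rsum: "lang (rsum rs) = (\<Union>r\<in>set rs. lang r)"
  by (induction rs) auto

lemma atoms_rsum: "atoms (rsum rs) = (\<Union>r\<in>set rs. atoms r)"
  by (induction rs) auto

lemma concat_single: "set ws \<subseteq> {[a]} \<Longrightarrow> concat ws = replicate (length ws) a"
  by (induction ws) auto

lemma lang_star_atom: "lang (RStar (RAtom a)) = {replicate m a | m. True}"
proof
  show "lang (RStar (RAtom a)) \<subseteq> {replicate m a | m. True}"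
  proof
    fix w assume "w \<in> lang (RStar (RAtom a))"
    then obtain ws where w1: "w = concat ws" and w2: "set ws \<subseteq> {[a]}" by auto
    have "w = replicate (length ws) a" unfolding w1 by (rule concat_single[OF w2])
    then show "w \<in> {replicate m a | m. True}" by blast
  qed
next
  show "{replicate m a | m. True} \<subseteq> lang (RStar (RAtom a))"
  proof
    fix w assume "w \<in> {replicate m a | m. True}"
    then obtain m where w: "w = replicate m a" by auto
    have c: "concat (replicate m [a]) = replicate m a" by (induction m) auto
    have s: "set (replicate m [a]) \<subseteq> lang (RAtom a)" by auto
    have "concat (replicate m [a]) \<in> lang (RStar (RAtom a))" unfolding lang.simps(6) using s by blast
    then show "w \<in> lang (RStar (RAtom a))" using w c by simp
  qed
qed

lemma star_atom_iff: "w \<in> lang (RStar (RAtom a)) \<longleftrightarrow> (\<exists>m. w = replicate m a)"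
  using lang_star_atom[of a] by blast

lemma rep_star: "replicate m a \<in> lang (RStar (RAtom a))"
  unfolding star_atom_iff by (rule exI[of _ m]) (rule refl)

lemma mem_times: "u \<in> lang r \<Longrightarrow> v \<in> lang s \<Longrightarrow> u @ v \<in> lang (RTimes r s)"
  by auto

lemma mem_atom: "[a] \<in> lang (RAtom a)" by simp

lemma star_mem: "set ws \<subseteq> lang r \<Longrightarrow> concat ws \<in> lang (RStar r)"
  unfolding lang.simps(6) by blast

definition Amove :: "nat \<Rightarrow> nat rexp" where
  "Amove k = RStar (rsum [RAtom (2*k), RAtom (2*k+1), RAtom (2*k+2), RAtom (2*k+3)])"

lemma concat_letters: "set ws \<subseteq> A \<Longrightarrow> l \<in> set (concat ws) \<Longrightarrow> \<exists>x\<in>A. l \<in> set x"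
  by auto

lemma mv_div: "(l::nat) \<in> {2*k, 2*k+1, 2*k+2, 2*k+3} \<Longrightarrow> k \<le> l div 2"
  by auto

lemma Amove_letters: "w \<in> lang (Amove k) \<Longrightarrow> \<forall>l\<in>set w. l \<in> {2*k, 2*k+1, 2*k+2, 2*k+3}"
proof
  fix l assume w: "w \<in> lang (Amove k)" and l: "l \<in> set w"
  obtain ws where ws: "w = concat ws" "set ws \<subseteq> lang (rsum [RAtom (2*k), RAtom (2*k+1), RAtom (2*k+2), RAtom (2*k+3)])"
    using w unfolding Amove_def by auto
  have "lang (rsum [RAtom (2*k), RAtom (2*k+1), RAtom (2*k+2), RAtom (2*k+3)]) = {[2*k], [2*k+1], [2*k+2], [2*k+3]}"
    by (auto simp: lang_rsum)
  then obtain x where "x \<in> {[2*k], [2*k+1], [2*k+2], [2*k+3]}" "l \<in> set x"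
    using concat_letters[of ws _ l] ws l by metis
  then show "l \<in> {2*k, 2*k+1, 2*k+2, 2*k+3}" by auto
qed

lemma Amove_ival: "w \<in> lang (Amove k) \<Longrightarrow> ival k w = 0"
  by (rule ival_moves) (use Amove_letters mv_div in blast)

lemma Amove_mem: "set w \<subseteq> {2*k, 2*k+1, 2*k+2, 2*k+3} \<Longrightarrow> w \<in> lang (Amove k)"
proof -
  assume s: "set w \<subseteq> {2*k, 2*k+1, 2*k+2, 2*k+3}"
  have c: "concat (map (\<lambda>l. [l]) w) = w" by (induction w) auto
  have "set (map (\<lambda>l. [l]) w) \<subseteq> lang (rsum [RAtom (2*k), RAtom (2*k+1), RAtom (2*k+2), RAtom (2*k+3)])"
    using s by (auto simp: lang_rsum)
  then show ?thesis unfolding Amove_def using star_mem c by metis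
qed

definition mvw :: "nat \<Rightarrow> int \<times> int \<Rightarrow> nat list" where
  "mvw k g = replicate (nat (fst g)) (2*k) @ replicate (nat (- fst g)) (2*k+1) @
             replicate (nat (snd g)) (2*k+2) @ replicate (nat (- snd g)) (2*k+3)"

lemma mvw_set: "set (mvw k g) \<subseteq> {2*k, 2*k+1, 2*k+2, 2*k+3}"
  unfolding mvw_def by auto

lemma mvw_ival: "ival k (mvw k g) = 0"
  by (rule ival_moves) (use mvw_set mv_div in blast)

lemma mvw_pos: "pos k (mvw k g) = g"
proof -
  have "pos k (mvw k g) = (int (nat (fst g)), 0) + ((- int (nat (- fst g)), 0) + ((0, int (nat (snd g))) + (0, - int (nat (- snd g)))))"
    unfolding mvw_def by (simp only: pos_append move_poss)
  then show ?thesis by (cases g) auto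
qed

lemma Amove_exists: "\<exists>w \<in> lang (Amove k). pos k w = g \<and> ival k w = 0"
  using Amove_mem[OF mvw_set] mvw_pos mvw_ival by blast

section \<open>Strictly increasing steps\<close>

definition Tr :: "nat \<Rightarrow> nat rexp" where
  "Tr k = RPlus (RTimes (RAtom (2*k+2)) (RStar (RAtom (2*k+2))))
     (RTimes (RAtom (2*k)) (RTimes (RStar (RAtom (2*k))) (RPlus (RStar (RAtom (2*k+2))) (RStar (RAtom (2*k+3))))))"

lemma pos_single: "pos k [l] = ldisp k l"
  by simp

lemma Tr_cases: "t \<in> lang (Tr k) \<Longrightarrow>
  (\<exists>m. t = [2*k+2] @ replicate m (2*k+2)) \<or>
  (\<exists>m p. t = [2*k] @ (replicate m (2*k) @ replicate p (2*k+2))) \<or>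
  (\<exists>m p. t = [2*k] @ (replicate m (2*k) @ replicate p (2*k+3)))"
  unfolding Tr_def by (auto simp del: lang.simps(6) simp add: star_atom_iff)

lemma Tr_props: "t \<in> lang (Tr k) \<Longrightarrow> ival k t = 0 \<and> 0 < pos k t"
proof -
  assume t: "t \<in> lang (Tr k)"
  have "\<forall>l\<in>set t. l \<in> {2*k, 2*k+1, 2*k+2, 2*k+3}"
    using Tr_cases[OF t] by (elim disjE exE) auto
  then have iv: "ival k t = 0" by (intro ival_moves) (use mv_div in blast)
  have "0 < pos k t"
    using Tr_cases[OF t]
    by (elim disjE exE) (simp_all only: pos_append pos_single move_poss ldisp_x ldisp_y ldisp_Y, simp_all add: zero_prod_def)
  then show ?thesis using iv by simp
qed

lemma Tr_exists: "0 < g \<Longrightarrow> \<exists>t \<in> lang (Tr k). pos k t = g"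
proof -
  assume g: "0 < g"
  obtain a b where ab: "g = (a, b)" by (cases g)
  show ?thesis
  proof (cases "a = 0")
    case True
    then have b: "0 < b" using g ab by (simp add: zero_prod_def)
    let ?t = "[2*k+2] @ replicate (nat b - 1) (2*k+2)"
    have "?t \<in> lang (Tr k)" unfolding Tr_def lang.simps(4) by (intro UnI1 mem_times mem_atom rep_star)
    moreover have "pos k ?t = (0, 1) + (0, int (nat b - 1))"
      by (simp only: pos_append pos_single move_poss ldisp_y)
    then have "pos k ?t = g" using b True ab by simp
    ultimately show ?thesis by blast
  next
    case False
    then have a: "0 < a" using g ab by (auto simp: zero_prod_def)
    show ?thesis
    proof (cases "0 \<le> b")
      case True
      let ?t = "[2*k] @ (replicate (nat a - 1) (2*k) @ replicate (nat b) (2*k+2))"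
      have "?t \<in> lang (Tr k)" unfolding Tr_def lang.simps(4) by (intro UnI2 mem_times mem_atom rep_star) (unfold lang.simps(4), rule UnI1, rule rep_star)
      moreover have "pos k ?t = (1, 0) + ((int (nat a - 1), 0) + (0, int (nat b)))"
        by (simp only: pos_append pos_single move_poss ldisp_x)
      then have "pos k ?t = g" using a True ab by simp
      ultimately show ?thesis by blast
    next
      case False
      let ?t = "[2*k] @ (replicate (nat a - 1) (2*k) @ replicate (nat (- b)) (2*k+3))"
      have "?t \<in> lang (Tr k)" unfolding Tr_def lang.simps(4) by (intro UnI2 mem_times mem_atom rep_star) (unfold lang.simps(4), rule UnI2, rule rep_star)
      moreover have "pos k ?t = (1, 0) + ((int (nat a - 1), 0) + (0, - int (nat (- b))))"
        by (simp only: pos_append pos_single move_poss ldisp_x)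
      then have "pos k ?t = g" using a False ab by simp
      ultimately show ?thesis by blast
    qed
  qed
qed

lemma Tr_letters: "atoms (Tr k) \<subseteq> {..<2 * (k + 2)}"
  unfolding Tr_def by auto

lemma Amove_atoms: "atoms (Amove k) \<subseteq> {..<2 * (k + 2)}"
  unfolding Amove_def by (auto simp: atoms_rsum)




section \<open>Words for elements of F\<close>

lemma blk_val:
  assumes j: "j < k"
  shows "ival k (mvw k g @ (replicate t (2*j) @ (mvw k (- g) @ X))) = mshift g (\<lambda>y. int t * lvec k (2*j) y) + ival k X
    \<and> pos k (mvw k g @ (replicate t (2*j) @ (mvw k (- g) @ X))) = pos k X"
proof -
  have a1: "\<And>Y. ival k (mvw k g @ Y) = mshift g (ival k Y)"
    by (simp only: ival_append[of k "mvw k g"] mvw_ival mvw_pos add.left_neutral)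
  have a2: "\<And>Y. ival k (mvw k (- g) @ Y) = mshift (- g) (ival k Y)"
    by (simp only: ival_append[of k "mvw k (- g)"] mvw_ival mvw_pos add.left_neutral)
  have a3: "\<And>Y. ival k (replicate t (2*j) @ Y) = (\<lambda>y. int t * lvec k (2*j) y) + ival k Y"
    by (simp only: ival_append[of k "replicate t (2*j)"] pos_rep_e[OF j] ival_rep_e[OF j] mshift_0)
  have "ival k (mvw k g @ (replicate t (2*j) @ (mvw k (- g) @ X))) =
      mshift g ((\<lambda>y. int t * lvec k (2*j) y) + mshift (- g) (ival k X))"
    by (simp only: a1 a2 a3)
  also have "\<dots> = mshift g (\<lambda>y. int t * lvec k (2*j) y) + ival k X"
    by (simp only: mshift_plus mshift_mshift add.right_inverse mshift_0)
  finally show ?thesis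
    by (simp add: pos_append mvw_pos pos_rep_e[OF j])
qed

lemma word_exists_aux:
  assumes "finite S"
  shows "\<forall>f. {x. f x \<noteq> 0} \<subseteq> S \<longrightarrow> (\<forall>x. 0 \<le> f x) \<longrightarrow> (\<forall>g j. k \<le> j \<longrightarrow> f (g, j) = 0) \<longrightarrow>
           (\<exists>w. set w \<subseteq> {..<2 * (k + 2)} \<and> ival k w = f \<and> pos k w = 0)"
  using assms
proof (induction S rule: finite_induct)
  case empty
  show ?case
  proof (intro allI impI)
    fix f :: melt assume "{x. f x \<noteq> 0} \<subseteq> {}"
    then have "f = 0" by (auto simp: fun_eq_iff)
    then show "\<exists>w. set w \<subseteq> {..<2 * (k + 2)} \<and> ival k w = f \<and> pos k w = 0"
      by (intro exI[of _ "[]"]) simp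
  qed
next
  case (insert p S)
  show ?case
  proof (intro allI impI)
    fix f :: melt
    assume sup: "{x. f x \<noteq> 0} \<subseteq> insert p S" and nn: "\<forall>x. 0 \<le> f x"
      and kk: "\<forall>g j. k \<le> j \<longrightarrow> f (g, j) = 0"
    let ?f' = "f(p := 0)"
    have "{x. ?f' x \<noteq> 0} \<subseteq> S" using sup by auto
    moreover have "\<forall>x. 0 \<le> ?f' x" using nn by simp
    moreover have "\<forall>g j. k \<le> j \<longrightarrow> ?f' (g, j) = 0" using kk by simp
    ultimately obtain w' where w': "set w' \<subseteq> {..<2 * (k + 2)}" "ival k w' = ?f'" "pos k w' = 0"
      using insert.IH by blast
    show "\<exists>w. set w \<subseteq> {..<2 * (k + 2)} \<and> ival k w = f \<and> pos k w = 0"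
    proof (cases "f p = 0")
      case True
      then have "?f' = f" by auto
      then show ?thesis using w' by auto
    next
      case False
      obtain g j where p: "p = (g, j)" by (cases p)
      have j: "j < k" using kk False p by (meson not_le)
      let ?t = "nat (f p)"
      let ?w = "mvw k g @ (replicate ?t (2*j) @ (mvw k (- g) @ w'))"
      have bv: "ival k ?w = mshift g (\<lambda>y. int ?t * lvec k (2*j) y) + ?f'" "pos k ?w = 0"
        using blk_val[OF j, of g ?t w'] w' by auto
      have "ival k ?w = f"
      proof (rule ext)
        fix x :: "(int \<times> int) \<times> nat"
        obtain a b j' where x: "x = ((a, b), j')" by (metis prod.collapse)
        have "0 \<le> f p" using nn by blast
        then have ft: "int ?t = f p" by simp
        show "ival k ?w x = f x"
          using j ft unfolding bv unfolding x p by (auto simp: mshift_apply lvec_def)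
      qed
      moreover have "set ?w \<subseteq> {..<2 * (k + 2)}"
        using w' j mvw_set[of k g] mvw_set[of k "- g"] by auto
      ultimately show ?thesis using bv by blast
    qed
  qed
qed

lemma word_exists:
  assumes "f \<in> Mcar n k"
  shows "\<exists>w. set w \<subseteq> {..<2 * (k + 2)} \<and> ival k w = f \<and> pos k w = 0"
  using word_exists_aux[of "{x. f x \<noteq> 0}" k] assms unfolding Mcar_def by auto

definition isum :: "((int \<times> int) \<times> melt) list \<Rightarrow> melt" where
  "isum ps = sum_list (map (\<lambda>(g, f). mshift g f) ps)"

lemma isum_Nil[simp]: "isum [] = 0" by (simp add: isum_def)
lemma isum_Cons[simp]: "isum ((g, f) # ps) = mshift g f + isum ps" by (simp add: isum_def)

lemma msum_eq: "msum n ps = (\<lambda>x. isum ps x mod int n)"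
proof (induction ps)
  case Nil then show ?case by (simp add: msum_def mzero_def isum_def)
next
  case (Cons p ps)
  obtain g f where p: "p = (g, f)" by (cases p)
  have "msum n (p # ps) = madd n (mshift g f) (msum n ps)" by (simp add: msum_def p)
  then show ?case using Cons by (simp add: p madd_def fun_eq_iff mod_add_right_eq)
qed

lemma mshift_zero'[simp]: "mshift g (\<lambda>a. 0) = (\<lambda>a. 0)"
  by (simp add: mshift_apply' fun_eq_iff)

lemma mshift_isum: "mshift g (isum ps) = isum (map (\<lambda>(h, f). (g + h, f)) ps)"
  by (induction ps) (auto simp: mshift_plus mshift_mshift)

lemma isum_perm: "mset qs = mset ps \<Longrightarrow> isum qs = isum ps"
  unfolding isum_def by (metis mset_map sum_mset_sum_list)

lemma lex_add_mono: "(a :: int \<times> int) < b \<Longrightarrow> g + a < g + b"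
  by (cases a; cases b; cases g) auto

lemma lex_trans: "(a :: int \<times> int) < b \<Longrightarrow> b < c \<Longrightarrow> a < c"
  by (rule less_trans)

lemma sorted_shift: "sorted_wrt (<) (map fst ps) \<Longrightarrow>
  sorted_wrt (<) (map fst (map (\<lambda>(h, f). ((g :: int \<times> int) + h, f)) ps))"
  by (induction ps) (auto simp: lex_add_mono)

lemma fst_shift: "map fst (map (\<lambda>(h, f). (g + h, f)) ps) = map (\<lambda>h. g + h) (map fst ps)"
  by (induction ps) auto

lemma snd_shift: "map snd (map (\<lambda>(h, f). (g + h, f)) ps) = map snd ps"
  by (induction ps) auto

definition F0 :: "nat list list \<Rightarrow> nat rexp" where "F0 fws = rsum (map rw fws)"

lemma lang_F0: "lang (F0 fws) = set fws"
  by (auto simp: F0_def lang_rsum lang_rw)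

lemma decomp:
  assumes FW: "\<forall>w\<in>set fws. \<exists>f\<in>F. ival k w = f \<and> pos k w = 0"
  shows "set ws \<subseteq> lang (RTimes (Tr k) (F0 fws)) \<Longrightarrow>
    \<exists>ps. sorted_wrt (<) (map fst ps) \<and> (\<forall>g\<in>set (map fst ps). 0 < g) \<and> set (map snd ps) \<subseteq> F
      \<and> ival k (concat ws) = isum ps"
proof (induction ws)
  case Nil then show ?case by (intro exI[of _ "[]"]) simp
next
  case (Cons w ws)
  then obtain ps where ps: "sorted_wrt (<) (map fst ps)" "\<forall>g\<in>set (map fst ps). 0 < g"
    "set (map snd ps) \<subseteq> F" "ival k (concat ws) = isum ps" by auto
  have "w \<in> lang (RTimes (Tr k) (F0 fws))" using Cons.prems by simp
  then obtain t fw where w: "w = t @ fw" "t \<in> lang (Tr k)" "fw \<in> set fws" by (auto simp: lang_F0)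
  obtain f where f: "f \<in> F" "ival k fw = f" "pos k fw = 0" using FW w(3) by blast
  have tp: "ival k t = 0" "0 < pos k t" using Tr_props[OF w(2)] by auto
  let ?ps' = "(pos k t, f) # map (\<lambda>(h, f). (pos k t + h, f)) ps"
  have "ival k (concat (w # ws)) = mshift (pos k t) (f + isum ps)"
    using w tp f ps by (simp add: ival_append zero_prod_def[symmetric])
  also have "\<dots> = isum ?ps'" by (simp add: mshift_plus mshift_isum)
  finally have iv: "ival k (concat (w # ws)) = isum ?ps'" .
  have gt: "\<forall>y\<in>set (map fst (map (\<lambda>(h, f). (pos k t + h, f)) ps)). pos k t < y"
    using ps(2) lex_add_mono[of 0 _ "pos k t"] by (auto simp: fst_shift)
  have s: "sorted_wrt (<) (map fst ?ps')"
    using sorted_shift[OF ps(1), of "pos k t"] gt by simp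
  have pos': "\<forall>g\<in>set (map fst ?ps'). 0 < g"
    using gt tp(2) by (auto intro: less_trans)
  have F': "set (map snd ?ps') \<subseteq> F" using ps(3) f(1) by (auto simp: snd_shift)
  show ?case using iv s pos' F' by blast
qed

lemma unshift: "map (\<lambda>(h, f). ((g :: int \<times> int) + h, f)) (map (\<lambda>(h, f). (- g + h, f)) ps) = ps"
  by (induction ps) auto

lemma build:
  assumes FW2: "\<forall>f\<in>F. \<exists>w\<in>set fws. ival k w = f \<and> pos k w = 0"
  shows "sorted_wrt (<) (map fst ps) \<Longrightarrow> (\<forall>g\<in>set (map fst ps). 0 < g) \<Longrightarrow> set (map snd ps) \<subseteq> F \<Longrightarrow>
    \<exists>ws. set ws \<subseteq> lang (RTimes (Tr k) (F0 fws)) \<and> ival k (concat ws) = isum ps"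
proof (induction "length ps" arbitrary: ps)
  case 0 then show ?case by (intro exI[of _ "[]"]) simp
next
  case (Suc N)
  then obtain p ps0 where pps: "ps = p # ps0" by (cases ps) auto
  have lenN: "N = length ps0" using Suc.hyps(2) pps by simp
  obtain g f where p: "p = (g, f)" by (cases p)
  note prems = Suc.prems[unfolded pps]
  have g0: "0 < g" using prems p by simp
  obtain t where t: "t \<in> lang (Tr k)" "pos k t = g" using Tr_exists[OF g0] by blast
  have ti: "ival k t = 0" using Tr_props[OF t(1)] by simp
  have fF: "f \<in> F" using prems p by simp
  obtain fw where fw: "fw \<in> set fws" "ival k fw = f" "pos k fw = 0" using FW2 fF by blast
  let ?ps = "map (\<lambda>(h, f). (- g + h, f)) ps0"
  have sps: "sorted_wrt (<) (map fst ps0)" using prems p by simp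
  have gl: "\<forall>h\<in>set (map fst ps0). g < h" using prems p by simp
  have "sorted_wrt (<) (map fst ?ps)" by (rule sorted_shift[OF sps])
  moreover have "\<forall>h\<in>set (map fst ?ps). 0 < h"
    using gl lex_add_mono[of g _ "- g"] by (auto simp: fst_shift)
  moreover have "set (map snd ?ps) \<subseteq> F" unfolding snd_shift using prems by simp
  ultimately have "\<exists>ws. set ws \<subseteq> lang (RTimes (Tr k) (F0 fws)) \<and> ival k (concat ws) = isum ?ps"
    using Suc.hyps(1)[of ?ps] lenN by simp
  then obtain ws where ws: "set ws \<subseteq> lang (RTimes (Tr k) (F0 fws))" "ival k (concat ws) = isum ?ps"
    by blast
  have mem: "t @ fw \<in> lang (RTimes (Tr k) (F0 fws))" using t(1) fw(1) by (auto simp: lang_F0)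
  have "ival k (concat ((t @ fw) # ws)) = mshift g (f + isum ?ps)"
    using t ti fw ws by (simp add: ival_append zero_prod_def[symmetric])
  also have "\<dots> = mshift g f + isum ps0" by (simp only: mshift_plus mshift_isum unshift)
  also have "\<dots> = isum ps" by (simp add: pps p)
  finally show ?case using ws mem by (intro exI[of _ "(t @ fw) # ws"]) auto
qed




definition rr :: "nat \<Rightarrow> nat list list \<Rightarrow> nat rexp" where
  "rr k fws = RTimes (Amove k) (RTimes (RStar (RTimes (Tr k) (F0 fws))) (Amove k))"

lemma equiv:
  assumes FW: "\<forall>w\<in>set fws. \<exists>f\<in>F. ival k w = f \<and> pos k w = 0"
    and FW2: "\<forall>f\<in>F. \<exists>w\<in>set fws. ival k w = f \<and> pos k w = 0"
  shows "(m, 0) \<in> word_val n k ` lang (rr k fws) \<longleftrightarrow> m \<in> subset_sum_set n F"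
proof
  assume "(m, 0) \<in> word_val n k ` lang (rr k fws)"
  then obtain u where u: "u \<in> lang (rr k fws)" "word_val n k u = (m, 0)" by auto
  obtain a1 a2 ws where dec: "u = a1 @ (concat ws @ a2)" "a1 \<in> lang (Amove k)" "a2 \<in> lang (Amove k)"
    "set ws \<subseteq> lang (RTimes (Tr k) (F0 fws))"
    using u(1) unfolding rr_def lang.simps(5) lang.simps(6) by blast
  obtain ps where ps: "sorted_wrt (<) (map fst ps)" "\<forall>g\<in>set (map fst ps). 0 < g"
    "set (map snd ps) \<subseteq> F" "ival k (concat ws) = isum ps"
    using decomp[OF FW dec(4)] by blast
  let ?ps2 = "map (\<lambda>(h, f). (pos k a1 + h, f)) ps"
  have "ival k u = mshift (pos k a1) (isum ps)"
    using dec ps(4) by (simp add: ival_append Amove_ival)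
  then have iu: "ival k u = isum ?ps2" by (simp only: mshift_isum)
  have m: "m = msum n ?ps2"
    using u(2) iu by (simp add: word_val_eq msum_eq)
  have "sorted_wrt (<) (map fst ?ps2)" by (rule sorted_shift[OF ps(1)])
  then have dist: "distinct (map fst ?ps2)" by (simp add: strict_sorted_iff)
  have sF: "set (map snd ?ps2) \<subseteq> F" unfolding snd_shift by (rule ps(3))
  show "m \<in> subset_sum_set n F"
    unfolding subset_sum_set_def
    using dist sF m zip_map_fst_snd[of ?ps2] by (intro CollectI exI[of _ "map fst ?ps2"] exI[of _ "map snd ?ps2"]) simp
next
  assume "m \<in> subset_sum_set n F"
  then obtain gs fs where gf: "length gs = length fs" "distinct gs" "set fs \<subseteq> F" "m = msum n (zip gs fs)"
    unfolding subset_sum_set_def by blast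
  let ?ps = "zip gs fs"
  let ?qs = "sort_key fst ?ps"
  have ms: "mset ?qs = mset ?ps" by simp
  have iq: "isum ?qs = isum ?ps" by (rule isum_perm[OF ms])
  have "mset (map fst ?qs) = mset (map fst ?ps)" using ms by (simp only: mset_map)
  then have "distinct (map fst ?qs)" using gf(1,2) mset_eq_imp_distinct_iff by fastforce
  then have sq: "sorted_wrt (<) (map fst ?qs)" by (simp add: strict_sorted_iff)
  have "mset (map snd ?qs) = mset (map snd ?ps)" using ms by (simp only: mset_map)
  then have "set (map snd ?qs) = set fs" using gf(1) by (metis mset_eq_setD map_snd_zip)
  then have qF: "set (map snd ?qs) \<subseteq> F" using gf(3) by simp
  define p0 where "p0 = (if ?qs = [] then 0 else fst (hd ?qs) + (0, -1))"
  have p0l: "\<forall>g\<in>set (map fst ?qs). p0 < g"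
  proof (cases ?qs)
    case Nil then show ?thesis by simp
  next
    case (Cons q qs')
    have l1: "fst q + (0, -1) < fst q" by (cases "fst q") simp
    have "\<forall>g\<in>set (map fst qs'). fst q < g" using sq Cons by simp
    then show ?thesis using l1 Cons unfolding p0_def by (auto intro: less_trans)
  qed
  let ?ps' = "map (\<lambda>(h, f). (- p0 + h, f)) ?qs"
  have s': "sorted_wrt (<) (map fst ?ps')" by (rule sorted_shift[OF sq])
  have pos': "\<forall>g\<in>set (map fst ?ps'). 0 < g"
    using p0l lex_add_mono[of p0 _ "- p0"] by (auto simp: fst_shift)
  have F': "set (map snd ?ps') \<subseteq> F" unfolding snd_shift by (rule qF)
  obtain ws where ws: "set ws \<subseteq> lang (RTimes (Tr k) (F0 fws))" "ival k (concat ws) = isum ?ps'"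
    using build[OF FW2 s' pos' F'] by blast
  obtain a1 where a1: "a1 \<in> lang (Amove k)" "pos k a1 = p0" "ival k a1 = 0"
    using Amove_exists by blast
  obtain a2 where a2: "a2 \<in> lang (Amove k)" "pos k a2 = - (p0 + pos k (concat ws))" "ival k a2 = 0"
    using Amove_exists by blast
  let ?u = "a1 @ (concat ws @ a2)"
  have mem: "?u \<in> lang (rr k fws)"
    unfolding rr_def by (intro mem_times a1(1) a2(1) star_mem ws(1))
  have "ival k ?u = mshift p0 (isum ?ps')"
    using a1 a2 ws by (simp add: ival_append)
  also have "\<dots> = isum ?qs" by (simp only: mshift_isum unshift)
  finally have iu: "ival k ?u = isum ?ps" using iq by simp
  have pu: "pos k ?u = 0" using a1 a2 by (simp add: pos_append)
  have "word_val n k ?u = (m, 0)"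
    using iu pu gf(4) by (simp add: word_val_eq msum_eq)
  then show "(m, 0) \<in> word_val n k ` lang (rr k fws)" using mem by force
qed



theorem proposition2:
  fixes n k :: nat and F :: "melt set"
  assumes "n \<ge> 2"
    and "finite F" and "F \<subseteq> Mcar n k" and "mzero \<notin> F"
    and "\<not> decidable {c. decodeM n k c \<in> subset_sum_set n F}"
  shows "\<exists>r :: nat rexp. atoms r \<subseteq> {..<2 * (k + 2)} \<and>
           \<not> decidable {c. word_val n k (decodeW k c) \<in> word_val n k ` lang r}"
proof -
  obtain fl where fl: "set fl = F" using finite_list[OF assms(2)] by blast
  have "\<forall>f\<in>F. \<exists>w. set w \<subseteq> {..<2 * (k + 2)} \<and> ival k w = f \<and> pos k w = 0"
    using word_exists assms(3) by blast
  then obtain W where W: "\<forall>f\<in>F. set (W f) \<subseteq> {..<2 * (k + 2)} \<and> ival k (W f) = f \<and> pos k (W f) = 0"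
    by metis
  define fws where "fws = map W fl"
  have FW: "\<forall>w\<in>set fws. \<exists>f\<in>F. ival k w = f \<and> pos k w = 0" using W fl by (auto simp: fws_def)
  have FW2: "\<forall>f\<in>F. \<exists>w\<in>set fws. ival k w = f \<and> pos k w = 0" using W fl by (auto simp: fws_def)
  have at: "atoms (rr k fws) \<subseteq> {..<2 * (k + 2)}"
    unfolding rr_def F0_def using Amove_atoms[of k] Tr_letters[of k] W fl
    by (auto simp: atoms_rsum atoms_rw fws_def)
  let ?S = "{c. word_val n k (decodeW k c) \<in> word_val n k ` lang (rr k fws)}"
  let ?A = "{c. decodeM n k c \<in> subset_sum_set n F}"
  have und: "\<not> decidable ?S"
  proof
    assume "decidable ?S"
    then obtain g where g: "\<forall>x. reval g [x] (if x \<in> ?S then 1 else 0)" unfolding decidable_def by blast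
    obtain H where H: "\<forall>xs. length xs = Suc 0 \<longrightarrow> reval H xs (hc k (xs ! 0))"
      using rf_hc[of k] unfolding rf_def by blast
    have "decidable ?A"
      unfolding decidable_def
    proof (intro exI allI)
      fix c
      have e: "(hc k c \<in> ?S) = (c \<in> ?A)"
        using word_val_hc[of n k c] equiv[OF FW FW2, of "decodeM n k c" n] by simp
      have h: "reval H [c] (hc k c)" using H by (metis length_Cons list.size(3) nth_Cons_0)
      have "reval (Comp g [H]) [c] (if hc k c \<in> ?S then 1 else 0)"
        by (rule reval.comp[where ys="[hc k c]"]) (use h g in auto)
      then show "reval (Comp g [H]) [c] (if c \<in> ?A then 1 else 0)" using e by simp
    qed
    then show False using assms(5) by blast
  qed
  show ?thesis using at und by blast
qed

end
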